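(* Let $\mathbf{x}$ be a program variable of type $\{0,1\}^2$, $\mathbf{y}$ a program variable of type $\{0,1\}$, and $\mathbf{w}$ an auxiliary program variable of type $\{0,1\}^2$ distinct from $\mathbf{x},\mathbf{y}$, all contained in the fixed set $X_{\mathrm{all}}$ of program variables. Let $Z=\begin{pmatrix}1&0\\0&-1\end{pmatrix}$, $X=\begin{pmatrix}0&1\\1&0\end{pmatrix}$ (Pauli matrices). Define the programs $\mathsf{Keygen} := \mathbf{init}\ \mathbf{x};\ \mathbf{apply}\ U_K\ \mathbf{to}\ \mathbf{x};\ \mathbf{init}\ \mathbf{w};\ \mathbf{apply}\ U_0\ \mathbf{to}\ \mathbf{w};\ \mathbf{apply}\ \mathrm{CNOT}\ \mathbf{to}\ \mathbf{x}\mathbf{w};\ \mathbf{init}\ \mathbf{w};\ \mathbf{apply}\ U_0\ \mathbf{to}\ \mathbf{w}$, $\mathsf{Enc} := \mathbf{apply}\ \big(\sum_{k\in\{0,1\}^2}|k\rangle\langle k|\otimes X^{k_2}Z^{k_1}\big)\ \mathbf{to}\ \mathbf{x}\mathbf{y}$, and $\mathsf{Erase}:=\mathbf{init}\ \mathbf{x};\ \mathbf{apply}\ U_0\ \mathbf{to}\ \mathbf{x}$, where $U_K$ is an isometry on $\ell^2(\{0,1\}^2)$ with $U_K|00\rangle=\frac12\sum_{k\in\{0,1\}^2}|k\rangle$, $U_0$ is an isometry on $\ell^2(\{0,1\}^2)$ with $U_0|00\rangle=|00\rangle$, and $\mathrm{CNOT}|a\rangle|b\rangle=|a\rangle|a\oplus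 b\rangle$ (bitwise XOR). Let $\mathbf{e}$ be an entangled ghost variable of type $\{0,1\}$ and let $\mathrm{uniform}(\mathbf{y})$ denote the predicate $\mathbf{y}\mathbf{e}=_q \tfrac{1}{\sqrt2}(|00\rangle+|11\rangle)$. Then the Hoare judgment $\{\top\}\ \mathsf{Keygen};\mathsf{Enc};\mathsf{Erase}\ \{\mathrm{uniform}(\mathbf{y})\}$ holds, where $\top=\ell^2[X_{\mathrm{all}}]$; i.e., for every mixed memory $\rho$ over $X_{\mathrm{all}}$, $[\![\mathsf{Keygen};\mathsf{Enc};\mathsf{Erase}]\!](\rho)\models \mathrm{uniform}(\mathbf{y})$.
   Context: Variables: each variable has a type (a set containing a distinguished element $0$). Variables are of three disjoint kinds: program variables, entangled ghost variables, unentangled ghost variables. For a set $V$ of variables, $\ell^2[V]$ is the Hilbert space with orthonormal basis $|m\rangle$ indexed by assignments $m$ on $V$ (functions with $m(v)$ in the type of $v$); its elements are quantum memories over $V$; $\ell^2[V\cup W]\cong\ell^2[V]\otimes\ell^2[W]$ for disjoint $V,W$, and a list of variables of type $T$ has $\ell^2[V]$ identified with $\ell^2(T)$. A mixed memory over $V$ is a positive trace-class operator on $\ell^2[V]$; $\mathrm{tr}_W$ is the partial trace over $W$. For an operator $M$ on $\ell^2[X]$ with $X\subseteq V$, "$M$ on $X$" denotes $M\otimes \mathrm{id}_{V\setminus X}$. A mixed memory over $V\cup W$ is $(V,W)$-separable if it is a convergent sum $\sum_i\rho_i\otimes\rho_i'$ of mixed memories over $V$ and $W$. $\mathrm{supp}\,\rho$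 is the closed span of the $\psi_i$ in any decomposition $\rho=\sum_i|\psi_i\rangle\langle\psi_i|$. A predicate over $V$ is a closed subspace of $\ell^2[V]$; for $X\subseteq V$, $X=_q\psi$ denotes $\mathrm{span}\{\psi\}\otimes\ell^2[V\setminus X]$; predicates $A$ over $V$ and $A'$ over $W$ are identified if $A\otimes \ell^2[W\setminus V]=A'\otimes\ell^2[V\setminus W]$. Satisfaction: for program variables $X$, entangled ghosts $E$, unentangled ghosts $U$, and a predicate $A$ over $X\cup E\cup U$, a mixed memory $\rho$ over $X$ satisfies $A$ ($\rho\models A$) iff there is an $(X\cup E,U)$-separable mixed memory $\rho^\circ$ over $X\cup E\cup U$ with $\mathrm{supp}\,\rho^\circ\subseteq A$ and $\mathrm{tr}_{E\cup U}\rho^\circ=\rho$. Programs: $c::=\mathbf{apply}\ U\ \mathbf{to}\ X\mid \mathbf{init}\ x\mid \mathbf{if}\ y\ \mathbf{then}\ c\ \mathbf{else}\ d\mid \mathbf{while}\ y\ \mathbf{do}\ c\mid c;d\mid \mathbf{skip}$ ($X$ a list of program variables, $U$ an isometry on $\ell^2[X]$, $y$ of type $\{0,1\}$). With $X_{\mathrm{all}}$ a fixed set of program variables containing all program variables of the programs considered, the semantics on mixed memories over $X_{\mathrm{all}}$ is: $[\![\mathbf{skip}]\!]=\mathrm{id}$, $[\![c;d]\!]=[\![d]\!]\circ[\![c]\!]$, $[\![\mathbf{apply}\ U\ \mathbf{to}\ X]\!](\rho)=(U\text{ on }X)\rho(U\text{ on }X)^*$, $[\![\mathbf{init}\ x]\!](\rho)=\mathrm{tr}_x\rho\otimes|0\rangle\langle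 0|_x$, $[\![\mathbf{if}\ y\ \mathbf{then}\ c\ \mathbf{else}\ d]\!](\rho)=[\![c]\!](P_1\rho P_1)+[\![d]\!](P_0\rho P_0)$ with $P_i=|i\rangle\langle i|$ on $y$, and $[\![\mathbf{while}\ y\ \mathbf{do}\ c]\!](\rho)=\sum_{n\ge0}P_0\big(([\![c]\!]\circ(\sigma\mapsto P_1\sigma P_1))^n(\rho)\big)P_0$. For predicates $A$ (over $X_{\mathrm{all}}$ and some ghosts) and $B$ (over $X_{\mathrm{all}}$ and possibly other ghosts), $\{A\}c\{B\}$ means: for all mixed memories $\rho$ over $X_{\mathrm{all}}$ with $\rho\models A$, $[\![c]\!](\rho)\models B$. *)

theory Defs
  imports "HOL-Analysis.Analysis"
begin

text \<open>A vector over a basis type 'b (the assignments of a set of variables) is a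
function 'b => complex; ell^2 membership is square-summability. An operator
(mixed memory) is represented by its matrix entries  rho m m' = <m|rho|m'>.\<close>

type_synonym 'b qvec = "'b \<Rightarrow> complex"
type_synonym 'b qmat = "'b \<Rightarrow> 'b \<Rightarrow> complex"

definition is_l2 :: "'b qvec \<Rightarrow> bool" where
  "is_l2 \<psi> \<longleftrightarrow> (\<lambda>m. (cmod (\<psi> m))\<^sup>2) summable_on UNIV"

definition l2norm_sq :: "'b qvec \<Rightarrow> real" where
  "l2norm_sq \<psi> = (\<Sum>\<^sub>\<infinity>m. (cmod (\<psi> m))\<^sup>2)"

text \<open>rho = sum_i |psi_i><psi_i| (trace-norm convergent): exactly the positive
trace-class operators.\<close>
definition mixed_decomp :: "(nat \<Rightarrow> 'b qvec) \<Rightarrow> 'b qmat \<Rightarrow> bool" where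
  "mixed_decomp \<psi> \<rho> \<longleftrightarrow> (\<forall>i. is_l2 (\<psi> i)) \<and> summable (\<lambda>i. l2norm_sq (\<psi> i)) \<and>
     (\<forall>m m'. (\<lambda>i. \<psi> i m * cnj (\<psi> i m')) sums \<rho> m m')"

definition mixed_memory :: "'b qmat \<Rightarrow> bool" where
  "mixed_memory \<rho> \<longleftrightarrow> (\<exists>\<psi>. mixed_decomp \<psi> \<rho>)"

definition cspan :: "'b qvec set \<Rightarrow> 'b qvec set" where
  "cspan S = {v. \<exists>F c. finite F \<and> F \<subseteq> S \<and> v = (\<lambda>m. \<Sum>s\<in>F. c s * s m)}"

definition l2_closure :: "'b qvec set \<Rightarrow> 'b qvec set" where
  "l2_closure S = {\<phi>. is_l2 \<phi> \<and> (\<forall>e>0. \<exists>s\<in>S. l2norm_sq (\<lambda>m. \<phi> m - s m) < e)}"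

text \<open>supp rho: closed span of the psi_i of a decomposition (independent of the choice).\<close>
definition qsupp :: "'b qmat \<Rightarrow> 'b qvec set" where
  "qsupp \<rho> = l2_closure (cspan (range (SOME \<psi>. mixed_decomp \<psi> \<rho>)))"

definition ptrace :: "('a \<times> 'c) qmat \<Rightarrow> 'a qmat" where
  "ptrace \<rho> = (\<lambda>a a'. \<Sum>\<^sub>\<infinity>c. \<rho> (a, c) (a', c))"

definition tensor_mat :: "'a qmat \<Rightarrow> 'c qmat \<Rightarrow> ('a \<times> 'c) qmat" where
  "tensor_mat \<rho> \<sigma> = (\<lambda>(a, c) (a', c'). \<rho> a a' * \<sigma> c c')"

definition separable_mm :: "('a \<times> 'c) qmat \<Rightarrow> bool" where
  "separable_mm \<rho> \<longleftrightarrow> (\<exists>(\<rho>1 :: nat \<Rightarrow> 'a qmat) (\<rho>2 :: nat \<Rightarrow> 'c qmat).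
      (\<forall>i. mixed_memory (\<rho>1 i) \<and> mixed_memory (\<rho>2 i)) \<and>
      (\<forall>m m'. (\<lambda>i. tensor_mat (\<rho>1 i) (\<rho>2 i) m m') sums \<rho> m m'))"

text \<open>Satisfaction: program variables 'x, entangled ghosts 'e, unentangled ghosts 'u.\<close>
definition sat :: "'x qmat \<Rightarrow> ((('x \<times> 'e) \<times> 'u) qvec) set \<Rightarrow> bool" where
  "sat \<rho> A \<longleftrightarrow> (\<exists>\<rho>o :: (('x \<times> 'e) \<times> 'u) qmat.
      mixed_memory \<rho>o \<and> separable_mm \<rho>o \<and> qsupp \<rho>o \<subseteq> A \<and> ptrace (ptrace \<rho>o) = \<rho>)"

text \<open>A register (list of program variables) of finite type 'a is given by a getter
and setter on the basis of ell^2[X_all]. (U on X) rho (U on X)^* :\<close>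
definition apply_reg :: "('m \<Rightarrow> 'a::finite) \<Rightarrow> ('a \<Rightarrow> 'm \<Rightarrow> 'm) \<Rightarrow> 'a qmat \<Rightarrow> 'm qmat \<Rightarrow> 'm qmat" where
  "apply_reg g s U \<rho> = (\<lambda>m m'. \<Sum>a\<in>UNIV. \<Sum>a'\<in>UNIV. U (g m) a * \<rho> (s a m) (s a' m') * cnj (U (g m') a'))"

text \<open>tr_x rho tensor |0><0|_x :\<close>
definition init_reg :: "('m \<Rightarrow> 'a::finite) \<Rightarrow> ('a \<Rightarrow> 'm \<Rightarrow> 'm) \<Rightarrow> 'a \<Rightarrow> 'm qmat \<Rightarrow> 'm qmat" where
  "init_reg g s z \<rho> = (\<lambda>m m'. if g m = z \<and> g m' = z then (\<Sum>a\<in>UNIV. \<rho> (s a m) (s a m')) else 0)"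

definition seqc :: "('s \<Rightarrow> 's) \<Rightarrow> ('s \<Rightarrow> 's) \<Rightarrow> 's \<Rightarrow> 's" (infixl ";;" 60) where
  "(c ;; d) = d \<circ> c"

definition isometry_mat :: "('a::finite) qmat \<Rightarrow> bool" where
  "isometry_mat U \<longleftrightarrow> (\<forall>b b'. (\<Sum>a\<in>UNIV. cnj (U a b) * U a b') = (if b = b' then 1 else 0))"

text \<open>ell^2[X_all] = ell^2[x] (x) ell^2[y] (x) ell^2[w] (x) ell^2[rest]; the basis of the
remaining variables of X_all is the arbitrary type 'r. {0,1} = bool (0 = False).\<close>
type_synonym 'r mem = "(bool \<times> bool) \<times> bool \<times> (bool \<times> bool) \<times> 'r"

definition get_x :: "'r mem \<Rightarrow> bool \<times> bool" where "get_x m = (case m of (x, y, w, r) \<Rightarrow> x)"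
definition set_x :: "bool \<times> bool \<Rightarrow> 'r mem \<Rightarrow> 'r mem" where "set_x a m = (case m of (x, y, w, r) \<Rightarrow> (a, y, w, r))"
definition get_w :: "'r mem \<Rightarrow> bool \<times> bool" where "get_w m = (case m of (x, y, w, r) \<Rightarrow> w)"
definition set_w :: "bool \<times> bool \<Rightarrow> 'r mem \<Rightarrow> 'r mem" where "set_w a m = (case m of (x, y, w, r) \<Rightarrow> (x, y, a, r))"
definition get_xw :: "'r mem \<Rightarrow> (bool \<times> bool) \<times> (bool \<times> bool)" where "get_xw m = (case m of (x, y, w, r) \<Rightarrow> (x, w))"
definition set_xw :: "(bool \<times> bool) \<times> (bool \<times> bool) \<Rightarrow> 'r mem \<Rightarrow> 'r mem" where
  "set_xw a m = (case m of (x, y, w, r) \<Rightarrow> (fst a, y, snd a, r))"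
definition get_xy :: "'r mem \<Rightarrow> (bool \<times> bool) \<times> bool" where "get_xy m = (case m of (x, y, w, r) \<Rightarrow> (x, y))"
definition set_xy :: "(bool \<times> bool) \<times> bool \<Rightarrow> 'r mem \<Rightarrow> 'r mem" where
  "set_xy a m = (case m of (x, y, w, r) \<Rightarrow> (fst a, snd a, w, r))"

definition zero2 :: "bool \<times> bool" where "zero2 = (False, False)"

definition mat_mul :: "('a::finite) qmat \<Rightarrow> 'a qmat \<Rightarrow> 'a qmat" where
  "mat_mul A B = (\<lambda>i j. \<Sum>k\<in>UNIV. A i k * B k j)"
definition id_mat :: "'a qmat" where "id_mat = (\<lambda>i j. if i = j then 1 else 0)"
definition bpow :: "'a qmat \<Rightarrow> bool \<Rightarrow> 'a qmat" where "bpow M k = (if k then M else id_mat)"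

definition pauliX :: "bool qmat" where "pauliX = (\<lambda>b b'. if b \<noteq> b' then 1 else 0)"
definition pauliZ :: "bool qmat" where "pauliZ = (\<lambda>b b'. if b = b' then (if b then -1 else 1) else 0)"

definition enc_U :: "((bool \<times> bool) \<times> bool) qmat" where
  "enc_U = (\<lambda>(k, b) (k', b'). if k = k' then mat_mul (bpow pauliX (snd k)) (bpow pauliZ (fst k)) b b' else 0)"

definition xor2 :: "bool \<times> bool \<Rightarrow> bool \<times> bool \<Rightarrow> bool \<times> bool" where
  "xor2 a b = (fst a \<noteq> fst b, snd a \<noteq> snd b)"

definition cnot2 :: "((bool \<times> bool) \<times> (bool \<times> bool)) qmat" where
  "cnot2 = (\<lambda>(a, b) (a', b'). if a = a' \<and> b = xor2 a' b' then 1 else 0)"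

definition Keygen :: "(bool \<times> bool) qmat \<Rightarrow> (bool \<times> bool) qmat \<Rightarrow> 'r mem qmat \<Rightarrow> 'r mem qmat" where
  "Keygen UK U0 = init_reg get_x set_x zero2 ;; apply_reg get_x set_x UK ;;
     init_reg get_w set_w zero2 ;; apply_reg get_w set_w U0 ;; apply_reg get_xw set_xw cnot2 ;;
     init_reg get_w set_w zero2 ;; apply_reg get_w set_w U0"

definition Enc :: "'r mem qmat \<Rightarrow> 'r mem qmat" where
  "Enc = apply_reg get_xy set_xy enc_U"

definition Erase :: "(bool \<times> bool) qmat \<Rightarrow> 'r mem qmat \<Rightarrow> 'r mem qmat" where
  "Erase U0 = init_reg get_x set_x zero2 ;; apply_reg get_x set_x U0"

text \<open>uniform(y):  y e =_q (|00>+|11>)/sqrt 2, i.e. span{beta} (x) ell^2[rest], as a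
predicate over X_all, the entangled ghost e (bool) and no unentangled ghosts (unit).
Since span{beta} is one-dimensional, span{beta} (x) ell^2[rest] = {beta (x) chi}.\<close>
definition bell :: "bool \<Rightarrow> bool \<Rightarrow> complex" where
  "bell y e = (if y = e then complex_of_real (1 / sqrt 2) else 0)"

definition uniform_y :: "((('r mem \<times> bool) \<times> unit) qvec) set" where
  "uniform_y = {\<phi>. \<exists>(ch :: ((bool \<times> bool) \<times> (bool \<times> bool) \<times> 'r \<times> unit) qvec). is_l2 ch \<and>
      (\<forall>x y w r e u. \<phi> (((x, y, w, r), e), u) = bell y e * ch (x, w, r, u))}"

end

theory Submission
  imports Defs
begin

lemma sum_bool2: "(\<Sum>a\<in>(UNIV::(bool\<times>bool) set). f a) = f (False,False) + f (False,True) + f (True,False) + f (True,True)"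
proof -
  have "(UNIV::(bool\<times>bool) set) = {(False,False),(False,True),(True,False),(True,True)}" by auto
  show ?thesis by (subst \<open>UNIV = _\<close>) (simp add: algebra_simps)
qed

lemma sum_bool: "(\<Sum>a\<in>(UNIV::bool set). f a) = f False + f True"
  by (simp add: UNIV_bool add.commute)

lemma sum_single_nz:
  fixes f :: "'a::finite \<Rightarrow> 'b::comm_monoid_add"
  assumes "\<And>a. a \<noteq> z \<Longrightarrow> f a = 0"
  shows "(\<Sum>a\<in>UNIV. f a) = f z"
proof -
  have "(\<Sum>a\<in>UNIV. f a) = (\<Sum>a\<in>UNIV. if a = z then f z else 0)"
    by (rule sum.cong) (auto simp: assms)
  also have "\<dots> = f z" by simp
  finally show ?thesis .
qed

lemma apply_reg_supp:
  assumes gs: "\<And>a m. g (s a m) = a" and ss: "\<And>a b m. s a (s b m) = s a m"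
    and supp: "\<And>m m'. \<sigma> m m' \<noteq> 0 \<Longrightarrow> g m = z \<and> g m' = z"
  shows "apply_reg g s U \<sigma> m m' = U (g m) z * \<sigma> (s z m) (s z m') * cnj (U (g m') z)"
proof -
  have "apply_reg g s U \<sigma> m m' = (\<Sum>a\<in>UNIV. \<Sum>a'\<in>UNIV. U (g m) a * \<sigma> (s a m) (s a' m') * cnj (U (g m') a'))"
    by (simp add: apply_reg_def)
  also have "\<dots> = (\<Sum>a'\<in>UNIV. U (g m) z * \<sigma> (s z m) (s a' m') * cnj (U (g m') a'))"
  proof (rule sum_single_nz)
    fix a assume "a \<noteq> z"
    then have "\<And>b. \<sigma> (s a m) (s b m') = 0" using supp gs by metis
    then show "(\<Sum>a'\<in>UNIV. U (g m) a * \<sigma> (s a m) (s a' m') * cnj (U (g m') a')) = 0" by simp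
  qed
  also have "\<dots> = U (g m) z * \<sigma> (s z m) (s z m') * cnj (U (g m') z)"
  proof (rule sum_single_nz)
    fix a assume "a \<noteq> z"
    then have "\<sigma> (s z m) (s a m') = 0" using supp gs by metis
    then show "U (g m) z * \<sigma> (s z m) (s a m') * cnj (U (g m') a) = 0" by simp
  qed
  finally show ?thesis .
qed

lemma gsx[simp]: "get_x (x,y,w,r) = x" "set_x a (x,y,w,r) = (a,y,w,r)"
  "get_w (x,y,w,r) = w" "set_w a (x,y,w,r) = (x,y,a,r)"
  "get_xw (x,y,w,r) = (x,w)" "set_xw p (x,y,w,r) = (fst p,y,snd p,r)"
  "get_xy (x,y,w,r) = (x,y)" "set_xy q (x,y,w,r) = (fst q,snd q,w,r)"
  by (simp_all add: get_x_def set_x_def get_w_def set_w_def get_xw_def set_xw_def get_xy_def set_xy_def)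

lemma regx: "get_x (set_x a m) = a" "set_x a (set_x b m) = set_x a m"
  by (cases m; auto)+
lemma regw: "get_w (set_w a m) = a" "set_w a (set_w b m) = set_w a m"
  by (cases m; auto)+

definition trxw :: "'r mem qmat \<Rightarrow> bool \<Rightarrow> 'r \<Rightarrow> bool \<Rightarrow> 'r \<Rightarrow> complex" where
  "trxw \<rho> y r y' r' = (\<Sum>b\<in>UNIV. \<Sum>a\<in>UNIV. \<rho> (a,y,b,r) (a,y',b,r'))"

lemma sum_prod_UNIV: "(\<Sum>p\<in>(UNIV::('a::finite\<times>'b::finite) set). f p) = (\<Sum>k\<in>UNIV. \<Sum>b\<in>UNIV. f (k,b))"
  by (simp add: sum.cartesian_product UNIV_Times_UNIV[symmetric] del: UNIV_Times_UNIV)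

definition tau :: "'r mem qmat \<Rightarrow> 'r \<Rightarrow> 'r \<Rightarrow> complex" where
  "tau \<rho> r r' = (\<Sum>b\<in>UNIV. trxw \<rho> b r b r')"

locale progctx =
  fixes UK U0 :: "(bool \<times> bool) qmat" and \<rho> :: "'r mem qmat"
  assumes UK: "\<And>k. UK k (False, False) = 1 / 2"
    and U0: "\<And>k. U0 k (False, False) = (if k = (False, False) then 1 else 0)"
begin

definition "s2 = apply_reg get_x set_x UK (init_reg get_x set_x zero2 \<rho>)"
lemma s2: "s2 (x,y,w,r) (x',y',w',r') = 1/4 * (\<Sum>a\<in>UNIV. \<rho> (a,y,w,r) (a,y',w',r'))"
proof -
  have "s2 (x,y,w,r) (x',y',w',r') = UK x zero2 * init_reg get_x set_x zero2 \<rho> (zero2,y,w,r) (zero2,y',w',r') * cnj (UK x' zero2)"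
    unfolding s2_def
    by (subst apply_reg_supp[where z=zero2]) (auto simp: regx init_reg_def split: if_splits)
  also have "\<dots> = 1/4 * (\<Sum>a\<in>UNIV. \<rho> (a,y,w,r) (a,y',w',r'))"
    by (simp add: init_reg_def zero2_def UK)
  finally show ?thesis .
qed

definition "s3 = init_reg get_w set_w zero2 s2"
lemma s3: "s3 (x,y,w,r) (x',y',w',r') = (if w = zero2 \<and> w' = zero2 then 1/4 * trxw \<rho> y r y' r' else 0)"
  by (simp add: s3_def init_reg_def s2 trxw_def sum_distrib_left)

lemma apply_reg_fix:
  assumes gs: "\<And>a m. g (s a m) = a" and ss: "\<And>a b m. s a (s b m) = s a m"
    and sg: "\<And>m. g m = z \<Longrightarrow> s z m = m"
    and supp: "\<And>m m'. \<sigma> m m' \<noteq> 0 \<Longrightarrow> g m = z \<and> g m' = z"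
    and U: "\<And>k. U k z = (if k = z then 1 else 0)"
  shows "apply_reg g s U \<sigma> = \<sigma>"
proof (intro ext)
  fix m m'
  have "apply_reg g s U \<sigma> m m' = U (g m) z * \<sigma> (s z m) (s z m') * cnj (U (g m') z)"
    by (rule apply_reg_supp[OF gs ss supp]) 
  also have "\<dots> = \<sigma> m m'"
    using supp[of m m'] by (auto simp: U sg)
  finally show "apply_reg g s U \<sigma> m m' = \<sigma> m m'" .
qed

definition "s4 = apply_reg get_w set_w U0 s3"
lemma s4: "s4 = s3"
  unfolding s4_def
  apply (rule apply_reg_fix[where z=zero2])
  subgoal by (rule regw)
  subgoal by (rule regw)
  subgoal for m by (cases m) auto
  subgoal for m m' by (cases m; cases m') (simp add: s3 split: if_splits)
  subgoal for k using U0 by (simp add: zero2_def)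
  done

definition "s5 = apply_reg get_xw set_xw cnot2 s4"

lemma cnot2_eq: "cnot2 (x,w) p = (if p = (x, xor2 x w) then 1 else 0)"
  by (cases p; cases x; cases w) (auto simp: cnot2_def xor2_def)

lemma cnot_sum: "(\<Sum>p\<in>UNIV. cnot2 (x,w) p * f p) = f (x, xor2 x w)"
  by (subst sum_single_nz[where z="(x, xor2 x w)"]) (simp_all add: cnot2_eq)

lemma cnot_sum': "(\<Sum>p\<in>UNIV. f p * cnj (cnot2 (x,w) p)) = f (x, xor2 x w)"
  by (subst sum_single_nz[where z="(x, xor2 x w)"]) (simp_all add: cnot2_eq)

lemma xor2_z: "(xor2 x w = zero2) = (w = x)"
  by (cases x; cases w) (auto simp: xor2_def zero2_def)

lemma s5: "s5 (x,y,w,r) (x',y',w',r') = (if w = x \<and> w' = x' then 1/4 * trxw \<rho> y r y' r' else 0)"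
proof -
  have "s5 (x,y,w,r) (x',y',w',r') = (\<Sum>a\<in>UNIV. cnot2 (x,w) a * (\<Sum>a'\<in>UNIV. s4 (set_xw a (x,y,w,r)) (set_xw a' (x',y',w',r')) * cnj (cnot2 (x',w') a')))"
    by (simp add: s5_def apply_reg_def sum_distrib_left mult.assoc)
  also have "\<dots> = s4 (x, y, xor2 x w, r) (x', y', xor2 x' w', r')"
    by (simp add: cnot_sum cnot_sum')
  finally show ?thesis by (simp add: s4 s3 xor2_z)
qed

definition "s6 = init_reg get_w set_w zero2 s5"
lemma s6: "s6 (x,y,w,r) (x',y',w',r') = (if w = zero2 \<and> w' = zero2 \<and> x = x' then 1/4 * trxw \<rho> y r y' r' else 0)"
proof -
  have "s6 (x,y,w,r) (x',y',w',r') = (if w = zero2 \<and> w' = zero2 then (\<Sum>c\<in>UNIV. if c = x \<and> c = x' then 1/4 * trxw \<rho> y r y' r' else 0) else 0)"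
    by (simp add: s6_def init_reg_def s5)
  also have "(\<Sum>c\<in>UNIV. if c = x \<and> c = x' then 1/4 * trxw \<rho> y r y' r' else 0) = (if x = x' then 1/4 * trxw \<rho> y r y' r' else 0)"
    by (subst sum_single_nz[where z=x]) auto
  finally show ?thesis by simp
qed

definition "s7 = apply_reg get_w set_w U0 s6"
lemma s7: "s7 = s6"
  unfolding s7_def
  apply (rule apply_reg_fix[where z=zero2])
  subgoal by (rule regw)
  subgoal by (rule regw)
  subgoal for m by (cases m) auto
  subgoal for m m' by (cases m; cases m') (simp add: s6 split: if_splits)
  subgoal for k using U0 by (simp add: zero2_def)
  done

lemma Mk: "mat_mul (bpow pauliX (snd k)) (bpow pauliZ (fst k)) y b =
   (if y = (b \<noteq> snd k) then (if fst k \<and> b then -1 else 1) else 0)"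
  by (cases k; cases y; cases b) (auto simp: mat_mul_def bpow_def pauliX_def pauliZ_def id_mat_def sum_bool)

definition Mk :: "bool \<times> bool \<Rightarrow> bool \<Rightarrow> bool \<Rightarrow> complex" where
  "Mk k y b = (if y = (b \<noteq> snd k) then (if fst k \<and> b then -1 else 1) else 0)"

lemma enc_eq: "enc_U (x,y) (k,b) = (if k = x then Mk x y b else 0)"
  by (auto simp: enc_U_def Mk Mk_def)


lemma enc_sum: "(\<Sum>p\<in>UNIV. enc_U (x,y) p * f p) = (\<Sum>b\<in>UNIV. Mk x y b * f (x,b))"
  apply (subst sum_prod_UNIV)
  apply (subst sum_single_nz[where z=x])
  by (auto simp: enc_eq)

lemma enc_sum': "(\<Sum>p\<in>UNIV. f p * cnj (enc_U (x,y) p)) = (\<Sum>b\<in>UNIV. f (x,b) * cnj (Mk x y b))"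
  apply (subst sum_prod_UNIV)
  apply (subst sum_single_nz[where z=x])
  by (auto simp: enc_eq)

definition "s8 = apply_reg get_xy set_xy enc_U s7"
lemma s8: "s8 (x,y,w,r) (x',y',w',r') = (if w = zero2 \<and> w' = zero2 \<and> x = x' then
   1/4 * (\<Sum>b\<in>UNIV. \<Sum>b'\<in>UNIV. Mk x y b * trxw \<rho> b r b' r' * cnj (Mk x y' b')) else 0)"
proof -
  have "s8 (x,y,w,r) (x',y',w',r') = (\<Sum>p\<in>UNIV. enc_U (x,y) p * (\<Sum>p'\<in>UNIV. s7 (set_xy p (x,y,w,r)) (set_xy p' (x',y',w',r')) * cnj (enc_U (x',y') p')))"
    by (simp add: s8_def apply_reg_def sum_distrib_left mult.assoc)
  also have "\<dots> = (\<Sum>b\<in>UNIV. Mk x y b * (\<Sum>b'\<in>UNIV. s7 (x,b,w,r) (x',b',w',r') * cnj (Mk x' y' b')))"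
    by (simp add: enc_sum enc_sum')
  finally show ?thesis
    by (auto simp: s7 s6 sum_distrib_left sum_distrib_right mult_ac)
qed


definition "s9 = init_reg get_x set_x zero2 s8"

lemma twirl: "(\<Sum>a\<in>UNIV. \<Sum>b\<in>UNIV. \<Sum>b'\<in>UNIV. Mk a y b * T b b' * cnj (Mk a y' b')) = (if y = y' then 2 * (T False False + T True True) else 0)"
  by (cases y; cases y') (simp_all add: sum_bool sum_bool2 Mk_def)

lemma s9: "s9 (x,y,w,r) (x',y',w',r') = (if x = zero2 \<and> x' = zero2 \<and> w = zero2 \<and> w' = zero2 \<and> y = y' then 1/2 * tau \<rho> r r' else 0)"
proof -
  have "s9 (x,y,w,r) (x',y',w',r') = (if x = zero2 \<and> x' = zero2 \<and> w = zero2 \<and> w' = zero2 then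
     1/4 * (\<Sum>a\<in>UNIV. \<Sum>b\<in>UNIV. \<Sum>b'\<in>UNIV. Mk a y b * trxw \<rho> b r b' r' * cnj (Mk a y' b')) else 0)"
    by (auto simp: s9_def init_reg_def s8 sum_distrib_left)
  also have "\<dots> = (if x = zero2 \<and> x' = zero2 \<and> w = zero2 \<and> w' = zero2 \<and> y = y' then 1/2 * tau \<rho> r r' else 0)"
    by (simp only: twirl) (simp add: tau_def sum_bool)
  finally show ?thesis .
qed

definition "s10 = apply_reg get_x set_x U0 s9"
lemma s10: "s10 = s9"
  unfolding s10_def
  apply (rule apply_reg_fix[where z=zero2])
  subgoal by (rule regx)
  subgoal by (rule regx)
  subgoal for m by (cases m) auto
  subgoal for m m' by (cases m; cases m') (simp add: s9 split: if_splits)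
  subgoal for k using U0 by (simp add: zero2_def)
  done

lemma prog: "(Keygen UK U0 ;; Enc ;; Erase U0) \<rho> = s9"
proof -
  have "(Keygen UK U0 ;; Enc ;; Erase U0) \<rho> = s10"
    unfolding Keygen_def Enc_def Erase_def seqc_def s10_def s9_def s8_def s7_def s6_def s5_def s4_def s3_def s2_def
    by (simp only: comp_def)
  then show ?thesis by (simp only: s10)
qed

lemma prog_eq: "(Keygen UK U0 ;; Enc ;; Erase U0) \<rho> (x,y,w,r) (x',y',w',r') = (if x = zero2 \<and> x' = zero2 \<and> w = zero2 \<and> w' = zero2 \<and> y = y' then 1/2 * tau \<rho> r r' else 0)"
  by (simp add: prog s9)
end


lemma is_l2_zero: "is_l2 (\<lambda>_. 0)"
  by (simp add: is_l2_def)

lemma sq_add_le: "(cmod (a + b))\<^sup>2 \<le> 2 * (cmod a)\<^sup>2 + 2 * (cmod b)\<^sup>2"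
proof -
  have "cmod (a + b) \<le> cmod a + cmod b" by (rule norm_triangle_ineq)
  then have "(cmod (a + b))\<^sup>2 \<le> (cmod a + cmod b)\<^sup>2" by (simp add: power_mono)
  also have "\<dots> \<le> 2 * (cmod a)\<^sup>2 + 2 * (cmod b)\<^sup>2"
    by (smt (verit) sum_squares_ge_zero power2_sum power2_diff zero_le_power2)
  finally show ?thesis .
qed

lemma is_l2_add: "is_l2 f \<Longrightarrow> is_l2 g \<Longrightarrow> is_l2 (\<lambda>m. f m + g m)"
  unfolding is_l2_def
  apply (rule summable_on_comparison_test[where f="\<lambda>m. 2 * (cmod (f m))\<^sup>2 + 2 * (cmod (g m))\<^sup>2"])
  apply (intro summable_on_add summable_on_cmult_right; assumption)
  by (simp_all add: sq_add_le)

lemma is_l2_scale: "is_l2 f \<Longrightarrow> is_l2 (\<lambda>m. c * f m)"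
  unfolding is_l2_def by (simp add: norm_mult power_mult_distrib summable_on_cmult_right)

lemma is_l2_diff: "is_l2 f \<Longrightarrow> is_l2 g \<Longrightarrow> is_l2 (\<lambda>m. f m - g m)"
  using is_l2_add[of f "\<lambda>m. (-1) * g m"] is_l2_scale[of g "-1"] by simp

lemma is_l2_sum: "finite F \<Longrightarrow> (\<forall>s\<in>F. is_l2 s) \<Longrightarrow> is_l2 (\<lambda>m. \<Sum>s\<in>F. c s * s m)"
proof (induction F rule: finite_induct)
  case empty then show ?case by (simp add: is_l2_zero)
next
  case (insert s F)
  then show ?case by (simp add: is_l2_add is_l2_scale)
qed

lemma l2_point: "is_l2 f \<Longrightarrow> (cmod (f m))\<^sup>2 \<le> l2norm_sq f"
proof -
  assume "is_l2 f"
  have "infsum (\<lambda>m. (cmod (f m))\<^sup>2) {m} \<le> infsum (\<lambda>m. (cmod (f m))\<^sup>2) UNIV"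
    by (rule infsum_mono_neutral) (use \<open>is_l2 f\<close> in \<open>auto simp: is_l2_def\<close>)
  then show ?thesis by (simp add: l2norm_sq_def)
qed

lemma l2norm_nonneg: "0 \<le> l2norm_sq f"
  unfolding l2norm_sq_def by (rule infsum_nonneg) simp

lemma sums_zero_nonneg: fixes f :: "nat \<Rightarrow> real"
  assumes "f sums 0" "\<And>n. 0 \<le> f n" shows "f n = 0"
  using suminf_eq_zero_iff[OF sums_summable[OF assms(1)] assms(2)] sums_unique[OF assms(1)] by simp

lemma sums_normsq_zero:
  assumes "(\<lambda>i. a i * cnj (a i)) sums 0" shows "a i = 0"
proof -
  have "(\<lambda>i. complex_of_real ((cmod (a i))\<^sup>2)) sums complex_of_real 0"
    using assms by (simp only: complex_norm_square of_real_0)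
  then have "(\<lambda>i. (cmod (a i))\<^sup>2) sums 0" by (simp only: sums_of_real_iff)
  then have "(cmod (a i))\<^sup>2 = 0" by (rule sums_zero_nonneg) simp
  then show ?thesis by simp
qed

lemma decomp_diag: "mixed_decomp \<phi> \<rho> \<Longrightarrow> \<rho> m m = 0 \<Longrightarrow> \<phi> i m = 0"
  unfolding mixed_decomp_def using sums_normsq_zero[of "\<lambda>i. \<phi> i m"] by metis

lemma decomp_eq:
  assumes "mixed_decomp \<phi> \<rho>" "\<rho> m1 m1 - \<rho> m1 m2 - \<rho> m2 m1 + \<rho> m2 m2 = 0"
  shows "\<phi> i m1 = \<phi> i m2"
proof -
  have s: "\<And>m m'. (\<lambda>i. \<phi> i m * cnj (\<phi> i m')) sums \<rho> m m'" using assms(1) by (simp add: mixed_decomp_def)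
  have "(\<lambda>i. \<phi> i m1 * cnj (\<phi> i m1) - \<phi> i m1 * cnj (\<phi> i m2) - \<phi> i m2 * cnj (\<phi> i m1) + \<phi> i m2 * cnj (\<phi> i m2))
     sums (\<rho> m1 m1 - \<rho> m1 m2 - \<rho> m2 m1 + \<rho> m2 m2)"
    by (intro sums_add sums_diff s)
  then have "(\<lambda>i. (\<phi> i m1 - \<phi> i m2) * cnj (\<phi> i m1 - \<phi> i m2)) sums 0"
    using assms(2) by (simp add: algebra_simps)
  from sums_normsq_zero[OF this] show ?thesis by simp
qed

lemma mixed_zero: "mixed_memory (\<lambda>_ _. 0)"
  unfolding mixed_memory_def mixed_decomp_def
  by (rule exI[of _ "\<lambda>_ _. 0"]) (simp add: is_l2_zero l2norm_sq_def)

lemma sums_interleave: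
  fixes f g :: "nat \<Rightarrow> 'a::real_normed_vector"
  assumes "f sums a" "g sums b"
  shows "(\<lambda>n. if even n then f (n div 2) else g (n div 2)) sums (a + b)"
proof -
  define f' where "f' n = (if even n then f (n div 2) else 0)" for n
  define g' where "g' n = (if even n then 0 else g (n div 2))" for n
  have "(\<lambda>n. f' (2*n)) sums a" using assms(1) by (simp add: f'_def)
  moreover have "strict_mono (\<lambda>n::nat. 2*n)" by (simp add: strict_mono_def)
  moreover have "\<And>n. n \<notin> range (\<lambda>n::nat. 2*n) \<Longrightarrow> f' n = 0"
    by (auto simp: f'_def elim!: evenE)
  ultimately have fa: "f' sums a" using sums_mono_reindex by blast
  have "(\<lambda>n. g' (2*n+1)) sums b" using assms(2) by (simp add: g'_def)
  moreover have "strict_mono (\<lambda>n::nat. 2*n+1)" by (simp add: strict_mono_def)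
  moreover have "\<And>n. n \<notin> range (\<lambda>n::nat. 2*n+1) \<Longrightarrow> g' n = 0"
    by (auto simp: g'_def elim!: oddE)
  ultimately have gb: "g' sums b" using sums_mono_reindex by blast
  have "(\<lambda>n. f' n + g' n) sums (a + b)" by (rule sums_add[OF fa gb])
  moreover have "(\<lambda>n. f' n + g' n) = (\<lambda>n. if even n then f (n div 2) else g (n div 2))"
    by (auto simp: f'_def g'_def)
  ultimately show ?thesis by simp
qed

lemma mixed_add:
  assumes "mixed_memory A" "mixed_memory B"
  shows "mixed_memory (\<lambda>m m'. A m m' + B m m')"
proof -
  obtain \<psi> where \<psi>: "mixed_decomp \<psi> A" using assms(1) by (auto simp: mixed_memory_def)
  obtain \<phi> where \<phi>: "mixed_decomp \<phi> B" using assms(2) by (auto simp: mixed_memory_def)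
  define xi where "xi n = (if even n then \<psi> (n div 2) else \<phi> (n div 2))" for n
  have "\<forall>i. is_l2 (xi i)" using \<psi> \<phi> by (simp add: xi_def mixed_decomp_def)
  moreover have "summable (\<lambda>i. l2norm_sq (xi i))"
  proof -
    have "(\<lambda>n. if even n then l2norm_sq (\<psi> (n div 2)) else l2norm_sq (\<phi> (n div 2))) sums
       ((\<Sum>i. l2norm_sq (\<psi> i)) + (\<Sum>i. l2norm_sq (\<phi> i)))"
      using \<psi> \<phi> by (intro sums_interleave summable_sums) (simp_all add: mixed_decomp_def)
    then show ?thesis unfolding xi_def by (simp add: if_distrib sums_summable cong: if_cong)
  qed
  moreover have "\<forall>m m'. (\<lambda>i. xi i m * cnj (xi i m')) sums (A m m' + B m m')"
  proof (intro allI)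
    fix m m'
    have "(\<lambda>n. if even n then \<psi> (n div 2) m * cnj (\<psi> (n div 2) m') else \<phi> (n div 2) m * cnj (\<phi> (n div 2) m')) sums (A m m' + B m m')"
      using \<psi> \<phi> by (intro sums_interleave) (simp_all add: mixed_decomp_def)
    moreover have "(\<lambda>i. xi i m * cnj (xi i m')) = (\<lambda>n. if even n then \<psi> (n div 2) m * cnj (\<psi> (n div 2) m') else \<phi> (n div 2) m * cnj (\<phi> (n div 2) m'))"
      by (auto simp: xi_def)
    ultimately show "(\<lambda>i. xi i m * cnj (xi i m')) sums (A m m' + B m m')" by simp
  qed
  ultimately show ?thesis unfolding mixed_memory_def mixed_decomp_def by blast
qed

lemma mixed_sum:
  assumes "finite S" "\<forall>q\<in>S. mixed_memory (A q)"
  shows "mixed_memory (\<lambda>m m'. \<Sum>q\<in>S. A q m m')"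
  using assms
proof (induction S rule: finite_induct)
  case empty then show ?case by (simp add: mixed_zero)
next
  case (insert q S)
  then show ?case by (simp add: mixed_add)
qed



definition Vf :: "'r mem \<Rightarrow> bool \<Rightarrow> complex" where
  "Vf m e = (if get_x m = zero2 \<and> get_w m = zero2 then bell (fst (snd m)) e else 0)"
definition getr :: "'r mem \<Rightarrow> 'r" where "getr m = snd (snd (snd m))"
definition mk :: "(bool \<times> bool) \<times> bool \<times> (bool \<times> bool) \<Rightarrow> 'r \<Rightarrow> 'r mem" where
  "mk q r = (fst q, fst (snd q), snd (snd q), r)"
definition piece :: "'r mem qmat \<Rightarrow> (bool \<times> bool) \<times> bool \<times> (bool \<times> bool) \<Rightarrow> ('r mem \<times> bool) qmat" where
  "piece \<rho> q = (\<lambda>p p'. Vf (fst p) (snd p) * Vf (fst p') (snd p') * \<rho> (mk q (getr (fst p))) (mk q (getr (fst p'))))"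

lemma cnj_Vf[simp]: "cnj (Vf m e) = Vf m e"
  by (simp add: Vf_def bell_def)

lemma inj_mk: "inj (mk q)" by (auto simp: inj_def mk_def)

lemma bell_sq: "cmod (bell b b) ^ 2 = 1/2"
  by (simp add: bell_def norm_divide power_divide)

lemma piece_vec:
  fixes q :: "(bool \<times> bool) \<times> bool \<times> (bool \<times> bool)" and \<psi> :: "'r mem qvec"
  assumes l2: "is_l2 \<psi>"
  defines "\<phi> \<equiv> (\<lambda>p. Vf (fst p) (snd p) * \<psi> (mk q (getr (fst p))))"
  shows "is_l2 \<phi> \<and> l2norm_sq \<phi> \<le> l2norm_sq \<psi>"
proof -
  define h where "h m = (cmod (\<psi> m))\<^sup>2" for m
  define g where "g r = h (mk q r)" for r
  have hs: "h summable_on UNIV" using l2 by (simp add: is_l2_def h_def[abs_def])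
  have "h summable_on range (mk q)" by (rule summable_on_subset[OF hs]) simp
  then have gs: "g summable_on UNIV"
    using summable_on_reindex[OF inj_mk[of q], of h] by (simp add: g_def[abs_def] comp_def)
  define G where "G = infsum g UNIV"
  have "infsum h (range (mk q)) \<le> infsum h UNIV"
    by (rule infsum_mono_neutral) (auto simp: h_def hs \<open>h summable_on range (mk q)\<close>)
  then have GL: "G \<le> l2norm_sq \<psi>"
    using infsum_reindex[OF inj_mk[of q], of h] by (simp add: G_def g_def[abs_def] comp_def l2norm_sq_def h_def[abs_def])
  have gG: "(g has_sum G) UNIV" using gs by (simp add: G_def)
  then have gG2: "((\<lambda>r. 1/2 * g r) has_sum (1/2 * G)) UNIV" by (rule has_sum_cmult_right)
  have part: "((\<lambda>br. 1/2 * g (snd br)) has_sum (1/2 * G)) (range (Pair b))" for b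
  proof -
    have "inj (Pair b)" by (simp add: inj_def)
    then have "(((\<lambda>br. 1/2 * g (snd br)) \<circ> Pair b) has_sum (1/2 * G)) UNIV" using gG2 by (simp add: comp_def)
    then show ?thesis using has_sum_reindex[OF \<open>inj (Pair b)\<close>] by blast
  qed
  have un: "range (Pair True) \<union> range (Pair False) = (UNIV :: (bool \<times> 'r) set)" by auto
  have "((\<lambda>br. 1/2 * g (snd br)) has_sum (1/2 * G + 1/2 * G)) (range (Pair True) \<union> range (Pair False))"
    by (rule has_sum_Un_disjoint[OF part part]) auto
  then have sG: "((\<lambda>br. 1/2 * g (snd br)) has_sum G) (UNIV :: (bool \<times> 'r) set)" by (simp add: un)
  define H :: "bool \<times> 'r \<Rightarrow> 'r mem \<times> bool" where "H br = ((zero2, fst br, zero2, snd br), fst br)" for br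
  have injH: "inj H" by (auto simp: inj_def H_def)
  define f where "f p = (cmod (\<phi> p))\<^sup>2" for p
  have fH: "f (H br) = 1/2 * g (snd br)" for br
    by (simp add: f_def \<phi>_def H_def Vf_def norm_mult power_mult_distrib bell_sq g_def h_def getr_def)
  have "((f \<circ> H) has_sum G) UNIV" using sG by (simp add: comp_def fH)
  then have "(f has_sum G) (range H)" by (simp add: has_sum_reindex[OF injH])
  moreover have "f p = 0" if "p \<notin> range H" for p
  proof -
    obtain x y w r e where p: "p = ((x,y,w,r),e)" by (metis prod.exhaust)
    have "\<not> (x = zero2 \<and> w = zero2 \<and> y = e)"
      using that p by (auto simp: H_def image_def)
    then show ?thesis by (auto simp: f_def \<phi>_def p Vf_def bell_def)
  qed
  ultimately have "(f has_sum G) UNIV"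
    by (subst has_sum_cong_neutral[where T="range H"]) auto
  then have "is_l2 \<phi>" "l2norm_sq \<phi> = G"
    by (auto simp: is_l2_def l2norm_sq_def f_def[abs_def] summable_on_def infsumI)
  then show ?thesis using GL by simp
qed

lemma piece_mixed:
  assumes "mixed_memory \<rho>" shows "mixed_memory (piece \<rho> q)"
proof -
  obtain \<psi> where \<psi>: "mixed_decomp \<psi> \<rho>" using assms by (auto simp: mixed_memory_def)
  define \<phi> where "\<phi> i = (\<lambda>p. Vf (fst p) (snd p) * \<psi> i (mk q (getr (fst p))))" for i
  have pv: "is_l2 (\<phi> i) \<and> l2norm_sq (\<phi> i) \<le> l2norm_sq (\<psi> i)" for i
    unfolding \<phi>_def by (rule piece_vec) (use \<psi> in \<open>simp add: mixed_decomp_def\<close>)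
  have "summable (\<lambda>i. l2norm_sq (\<phi> i))"
    by (rule summable_comparison_test[where g="\<lambda>i. l2norm_sq (\<psi> i)"])
       (use pv \<psi> in \<open>auto simp: mixed_decomp_def l2norm_nonneg\<close>)
  moreover have "(\<lambda>i. \<phi> i p * cnj (\<phi> i p')) sums piece \<rho> q p p'" for p p'
  proof -
    have "(\<lambda>i. (Vf (fst p) (snd p) * Vf (fst p') (snd p')) * (\<psi> i (mk q (getr (fst p))) * cnj (\<psi> i (mk q (getr (fst p'))))))
      sums ((Vf (fst p) (snd p) * Vf (fst p') (snd p')) * \<rho> (mk q (getr (fst p))) (mk q (getr (fst p'))))"
      by (rule sums_mult) (use \<psi> in \<open>unfold mixed_decomp_def, blast\<close>)
    then show ?thesis by (simp add: \<phi>_def piece_def mult_ac)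
  qed
  ultimately show ?thesis using pv unfolding mixed_memory_def mixed_decomp_def by blast
qed

lemma unit_ext:
  assumes "mixed_memory A" shows "mixed_memory ((\<lambda>p p'. A (fst p) (fst p')) :: ('a \<times> unit) qmat)"
proof -
  obtain \<psi> where \<psi>: "mixed_decomp \<psi> A" using assms by (auto simp: mixed_memory_def)
  have bij: "bij_betw (fst :: 'a \<times> unit \<Rightarrow> 'a) UNIV UNIV"
    by (auto simp: bij_betw_def inj_def image_def)
  have l2: "is_l2 (\<lambda>p::'a\<times>unit. \<psi> i (fst p))" "l2norm_sq (\<lambda>p::'a\<times>unit. \<psi> i (fst p)) = l2norm_sq (\<psi> i)" for i
    using \<psi> summable_on_reindex_bij_betw[OF bij, of "\<lambda>m. (cmod (\<psi> i m))\<^sup>2"]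
      infsum_reindex_bij_betw[OF bij, of "\<lambda>m. (cmod (\<psi> i m))\<^sup>2"]
    by (auto simp: mixed_decomp_def is_l2_def l2norm_sq_def)
  show ?thesis unfolding mixed_memory_def mixed_decomp_def
    by (rule exI[of _ "\<lambda>i p. \<psi> i (fst p)"]) (use \<psi> l2 in \<open>simp add: mixed_decomp_def\<close>)
qed



definition rhoA :: "'r mem qmat \<Rightarrow> ('r mem \<times> bool) qmat" where
  "rhoA \<rho> = (\<lambda>p p'. Vf (fst p) (snd p) * Vf (fst p') (snd p') * tau \<rho> (getr (fst p)) (getr (fst p')))"
definition rhoo :: "'r mem qmat \<Rightarrow> (('r mem \<times> bool) \<times> unit) qmat" where
  "rhoo \<rho> = (\<lambda>p p'. rhoA \<rho> (fst p) (fst p'))"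

lemma tau_alt: "tau \<rho> r r' = (\<Sum>q\<in>UNIV. \<rho> (mk q r) (mk q r'))"
proof -
  have "(\<Sum>q\<in>UNIV. \<rho> (mk q r) (mk q r')) = (\<Sum>a\<in>UNIV. \<Sum>b\<in>UNIV. \<Sum>c\<in>UNIV. \<rho> (a,b,c,r) (a,b,c,r'))"
    by (simp add: sum_prod_UNIV mk_def)
  also have "\<dots> = (\<Sum>b\<in>UNIV. \<Sum>a\<in>UNIV. \<Sum>c\<in>UNIV. \<rho> (a,b,c,r) (a,b,c,r'))"
    by (rule sum.swap)
  also have "\<dots> = (\<Sum>b\<in>UNIV. \<Sum>c\<in>UNIV. \<Sum>a\<in>UNIV. \<rho> (a,b,c,r) (a,b,c,r'))"
    by (rule sum.cong[OF refl], rule sum.swap)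
  finally show ?thesis by (simp add: tau_def trxw_def)
qed

lemma rhoA_mixed: "mixed_memory \<rho> \<Longrightarrow> mixed_memory (rhoA \<rho>)"
proof -
  assume a: "mixed_memory \<rho>"
  have "rhoA \<rho> = (\<lambda>p p'. \<Sum>q\<in>UNIV. piece \<rho> q p p')"
    by (simp add: rhoA_def piece_def tau_alt sum_distrib_left)
  then show ?thesis using mixed_sum[of UNIV "piece \<rho>"] piece_mixed[OF a] by simp
qed

lemma rhoo_mixed: "mixed_memory \<rho> \<Longrightarrow> mixed_memory (rhoo \<rho>)"
  unfolding rhoo_def by (rule unit_ext, rule rhoA_mixed)

lemma unit_mixed: "mixed_memory (\<lambda>(_::unit) (_::unit). (1::complex))"
proof -
  define \<psi> :: "nat \<Rightarrow> unit qvec" where "\<psi> i = (\<lambda>_. if i = 0 then 1 else 0)" for i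
  have l: "l2norm_sq (\<psi> i) = (if i = 0 then 1 else 0)" for i
    by (simp add: l2norm_sq_def \<psi>_def)
  have "(\<lambda>i. if i = 0 then (1::real) else 0) sums 1" using sums_single[of 0 "\<lambda>_. 1::real"] by simp
  then have s1: "summable (\<lambda>i. l2norm_sq (\<psi> i))" by (simp add: l sums_summable)
  have "(\<lambda>i. if i = 0 then (1::complex) else 0) sums 1" using sums_single[of 0 "\<lambda>_. 1::complex"] by simp
  then have s2: "(\<lambda>i. \<psi> i m * cnj (\<psi> i m')) sums 1" for m m' by (simp add: \<psi>_def if_distrib cong: if_cong)
  show ?thesis unfolding mixed_memory_def mixed_decomp_def
    by (rule exI[of _ \<psi>]) (simp add: s1 s2 is_l2_def)
qed

lemma tensor_mat_eq: "tensor_mat X Y p p' = X (fst p) (fst p') * Y (snd p) (snd p')"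
  by (cases p; cases p') (simp add: tensor_mat_def)

lemma rhoo_sep: "mixed_memory \<rho> \<Longrightarrow> separable_mm (rhoo \<rho>)"
proof -
  assume a: "mixed_memory \<rho>"
  define r1 where "r1 i = (if i = 0 then rhoA \<rho> else (\<lambda>_ _. 0))" for i :: nat
  define r2 :: "nat \<Rightarrow> unit qmat" where "r2 i = (if i = 0 then (\<lambda>_ _. 1) else (\<lambda>_ _. 0))" for i :: nat
  have m: "mixed_memory (r1 i) \<and> mixed_memory (r2 i)" for i
    by (cases "i = 0") (auto simp: r1_def r2_def intro: mixed_zero unit_mixed rhoA_mixed[OF a])
  have s: "(\<lambda>i. tensor_mat (r1 i) (r2 i) p p') sums rhoo \<rho> p p'" for p p'
  proof -
    have "(\<lambda>i. if i = 0 then rhoA \<rho> (fst p) (fst p') else 0) sums rhoA \<rho> (fst p) (fst p')"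
      using sums_single[of 0 "\<lambda>_. rhoA \<rho> (fst p) (fst p')"] by simp
    moreover have "(\<lambda>i. tensor_mat (r1 i) (r2 i) p p') = (\<lambda>i. if i = 0 then rhoA \<rho> (fst p) (fst p') else 0)"
      by (auto simp: tensor_mat_eq r1_def r2_def)
    ultimately show ?thesis by (simp add: rhoo_def)
  qed
  show ?thesis unfolding separable_mm_def using m s by blast
qed

definition Cset :: "((('r mem \<times> bool) \<times> unit) qvec) set" where
  "Cset = {\<phi>. is_l2 \<phi> \<and> (\<forall>x y w r e u. y \<noteq> e \<longrightarrow> \<phi> (((x,y,w,r),e),u) = 0) \<and>
     (\<forall>x w r u. \<phi> (((x,False,w,r),False),u) = \<phi> (((x,True,w,r),True),u))}"

lemma CsetD:
  assumes "\<phi> \<in> Cset"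
  shows CsetD1: "is_l2 \<phi>" and CsetD2: "y \<noteq> e \<Longrightarrow> \<phi> (((x,y,w,r),e),u) = 0"
    and CsetD3: "\<phi> (((x,False,w,r),False),u) = \<phi> (((x,True,w,r),True),u)"
proof -
  have A: "is_l2 \<phi> \<and> (\<forall>x y w r e u. y \<noteq> e \<longrightarrow> \<phi> (((x,y,w,r),e),u) = 0) \<and>
     (\<forall>x w r u. \<phi> (((x,False,w,r),False),u) = \<phi> (((x,True,w,r),True),u))"
    using assms unfolding Cset_def mem_Collect_eq .
  show "is_l2 \<phi>" using A by (rule conjunct1)
  show "y \<noteq> e \<Longrightarrow> \<phi> (((x,y,w,r),e),u) = 0"
  proof -
    assume "y \<noteq> e"
    moreover have "\<forall>x y w r e u. y \<noteq> e \<longrightarrow> \<phi> (((x,y,w,r),e),u) = 0" using A by (elim conjE)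
    ultimately show ?thesis by (elim allE impE)
  qed
  have "\<forall>x w r u. \<phi> (((x,False,w,r),False),u) = \<phi> (((x,True,w,r),True),u)" using A by (elim conjE)
  then show "\<phi> (((x,False,w,r),False),u) = \<phi> (((x,True,w,r),True),u)" by (elim allE)
qed

lemma CsetI:
  assumes "is_l2 \<phi>" "\<And>x y w r e u. y \<noteq> e \<Longrightarrow> \<phi> (((x,y,w,r),e),u) = 0"
    "\<And>x w r u. \<phi> (((x,False,w,r),False),u) = \<phi> (((x,True,w,r),True),u)"
  shows "\<phi> \<in> Cset"
  unfolding Cset_def mem_Collect_eq using assms by blast

lemma Cset_cspan: "S \<subseteq> Cset \<Longrightarrow> cspan S \<subseteq> Cset"
proof
  fix v assume S: "S \<subseteq> Cset" and "v \<in> cspan S"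
  then obtain F c where F: "finite F" "F \<subseteq> S" and v: "v = (\<lambda>m. \<Sum>s\<in>F. c s * s m)"
    unfolding cspan_def by blast
  have FC: "\<And>s. s \<in> F \<Longrightarrow> s \<in> Cset" using F S by auto
  have FCl: "\<And>s. s \<in> F \<Longrightarrow> is_l2 s" by (rule CsetD1[OF FC])
  have FCz: "\<And>s x y w r e u. s \<in> F \<Longrightarrow> y \<noteq> e \<Longrightarrow> s (((x,y,w,r),e),u) = 0" by (rule CsetD2[OF FC])
  have FCe: "\<And>s x w r u. s \<in> F \<Longrightarrow> s (((x,False,w,r),False),u) = s (((x,True,w,r),True),u)" by (rule CsetD3[OF FC])
  have "is_l2 v" unfolding v by (rule is_l2_sum[OF F(1)]) (use FCl in blast)
  moreover have "v (((x,y,w,r),e),u) = 0" if "y \<noteq> e" for x y w r e u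
    unfolding v by (rule sum.neutral) (use FCz that in simp)
  moreover have "v (((x,False,w,r),False),u) = v (((x,True,w,r),True),u)" for x w r u
    unfolding v by (rule sum.cong[OF refl]) (use FCe in simp)
  ultimately show "v \<in> Cset" by (intro CsetI)
qed

lemma close_pt:
  assumes "\<phi> \<in> l2_closure Cset"
  shows "\<And>e. e > 0 \<Longrightarrow> \<exists>s\<in>Cset. \<forall>m. (cmod (\<phi> m - s m))\<^sup>2 < e"
proof -
  fix e :: real assume "e > 0"
  then obtain s where s: "s \<in> Cset" "l2norm_sq (\<lambda>m. \<phi> m - s m) < e"
    using assms by (auto simp: l2_closure_def)
  have "is_l2 (\<lambda>m. \<phi> m - s m)" using assms s CsetD1 by (intro is_l2_diff) (auto simp: l2_closure_def)
  then have "\<forall>m. (cmod (\<phi> m - s m))\<^sup>2 < e"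
    using l2_point s(2) by (metis (no_types, lifting) order_le_less_trans)
  then show "\<exists>s\<in>Cset. \<forall>m. (cmod (\<phi> m - s m))\<^sup>2 < e" using s(1) by blast
qed

lemma Cset_closure: "l2_closure Cset \<subseteq> Cset"
proof
  fix \<phi> assume phi: "\<phi> \<in> l2_closure Cset"
  have l2: "is_l2 \<phi>" using phi by (simp add: l2_closure_def)
  have z: "\<phi> (((x,y,w,r),e),u) = 0" if "y \<noteq> e" for x y w r e u
  proof (rule ccontr)
    define p where "p = (((x,y,w,r),e),u)"
    assume "\<phi> (((x,y,w,r),e),u) \<noteq> 0"
    then have pos: "(cmod (\<phi> p))\<^sup>2 > 0" by (simp add: p_def)
    obtain s where s: "s \<in> Cset" "\<forall>m. (cmod (\<phi> m - s m))\<^sup>2 < (cmod (\<phi> p))\<^sup>2"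
      using close_pt[OF phi pos] by blast
    have "s p = 0" unfolding p_def using s(1) that by (rule CsetD2)
    then show False using s(2) by (metis diff_zero less_irrefl)
  qed
  have eq: "\<phi> (((x,False,w,r),False),u) = \<phi> (((x,True,w,r),True),u)" for x w r u
  proof (rule ccontr)
    define m1 where "m1 = (((x,False,w,r),False),u)"
    define m2 where "m2 = (((x,True,w,r),True),u)"
    define d where "d = cmod (\<phi> m1 - \<phi> m2)"
    assume "\<phi> (((x,False,w,r),False),u) \<noteq> \<phi> (((x,True,w,r),True),u)"
    then have dpos: "d > 0" by (simp add: m1_def m2_def d_def)
    then have "(d/2)\<^sup>2 > 0" by simp
    then obtain s where s: "s \<in> Cset" "\<forall>m. (cmod (\<phi> m - s m))\<^sup>2 < (d/2)\<^sup>2"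
      using close_pt[OF phi] by blast
    have s12: "s m1 = s m2" unfolding m1_def m2_def using s(1) by (rule CsetD3)
    have d0: "0 \<le> d/2" using dpos by simp
    have a1: "cmod (\<phi> m1 - s m1) < d/2"
      using power_less_imp_less_base[OF spec[OF s(2), of m1] d0] .
    have a2: "cmod (\<phi> m2 - s m2) < d/2"
      using power_less_imp_less_base[OF spec[OF s(2), of m2] d0] .
    have "d = cmod ((\<phi> m1 - s m1) - (\<phi> m2 - s m2))" using s12 by (simp add: d_def)
    also have "\<dots> \<le> cmod (\<phi> m1 - s m1) + cmod (\<phi> m2 - s m2)" by (rule norm_triangle_ineq4)
    finally show False using a1 a2 by simp
  qed
  show "\<phi> \<in> Cset" using l2 z eq by (intro CsetI)
qed

lemma Cset_unif: "Cset \<subseteq> uniform_y"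
proof
  fix \<phi> :: "(('r mem \<times> bool) \<times> unit) qvec" assume phi: "\<phi> \<in> Cset"
  note phl = CsetD1[OF phi] and phz = CsetD2[OF phi] and phe = CsetD3[OF phi]
  define h :: "(bool \<times> bool) \<times> (bool \<times> bool) \<times> 'r \<times> unit \<Rightarrow> ('r mem \<times> bool) \<times> unit" where
    "h = (\<lambda>(x,w,r,u). (((x, False, w, r), False), u))"
  have injh: "inj h" unfolding inj_def h_def by auto
  define ch where "ch k = complex_of_real (sqrt 2) * \<phi> (h k)" for k
  have "(\<lambda>m. (cmod (\<phi> m))\<^sup>2) summable_on range h"
    using phl unfolding is_l2_def by (rule summable_on_subset) simp
  then have "is_l2 (\<lambda>k. \<phi> (h k))"
    using summable_on_reindex[OF injh, of "\<lambda>m. (cmod (\<phi> m))\<^sup>2"] by (simp add: is_l2_def comp_def)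
  then have l2: "is_l2 ch" unfolding ch_def[abs_def] by (rule is_l2_scale)
  have c1: "complex_of_real (1 / sqrt 2) * complex_of_real (sqrt 2) = 1"
    by (simp flip: of_real_mult)
  have eq: "\<phi> (((x, y, w, r), e), u) = bell y e * ch (x, w, r, u)" for x y w r e u
  proof (cases "y = e")
    case False then show ?thesis using phz[of y e x w r u] by (simp add: bell_def)
  next
    case True
    have 1: "\<phi> (((x, y, w, r), e), u) = \<phi> (h (x, w, r, u))"
      using phe[of x w r u] True by (cases e) (simp_all add: h_def)
    have "bell y e * ch (x, w, r, u) = (complex_of_real (1 / sqrt 2) * complex_of_real (sqrt 2)) * \<phi> (h (x, w, r, u))"
      using True by (simp only: bell_def ch_def if_True mult.assoc simp_thms)
    also have "\<dots> = \<phi> (h (x, w, r, u))" by (simp only: c1 mult_1)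
    finally show ?thesis using 1 by simp
  qed
  show "\<phi> \<in> uniform_y" unfolding uniform_y_def mem_Collect_eq
  proof (intro exI[of _ ch] conjI allI)
    show "is_l2 ch" by (rule l2)
    fix x y w r e u show "\<phi> (((x, y, w, r), e), u) = bell y e * ch (x, w, r, u)" by (rule eq)
  qed
qed

lemma decomp_in_Cset:
  assumes "mixed_decomp \<phi> (rhoo \<rho>)" shows "\<phi> i \<in> Cset"
proof -
  have "is_l2 (\<phi> i)" using assms by (simp add: mixed_decomp_def)
  moreover have "\<phi> i (((x,y,w,r),e),u) = 0" if "y \<noteq> e" for x y w r e u
    by (rule decomp_diag[OF assms]) (use that in \<open>simp add: rhoo_def rhoA_def Vf_def bell_def\<close>)
  moreover have "\<phi> i (((x,False,w,r),False),u) = \<phi> i (((x,True,w,r),True),u)" for x w r u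
    by (rule decomp_eq[OF assms]) (simp add: rhoo_def rhoA_def Vf_def bell_def getr_def)
  ultimately show ?thesis by (intro CsetI)
qed

lemma qsupp_rhoo: "mixed_memory \<rho> \<Longrightarrow> qsupp (rhoo \<rho>) \<subseteq> uniform_y"
proof -
  assume a: "mixed_memory \<rho>"
  let ?\<phi> = "SOME \<psi>. mixed_decomp \<psi> (rhoo \<rho>)"
  have "mixed_decomp ?\<phi> (rhoo \<rho>)" using rhoo_mixed[OF a] unfolding mixed_memory_def by (rule someI_ex)
  then have "range ?\<phi> \<subseteq> Cset" using decomp_in_Cset by blast
  then have "cspan (range ?\<phi>) \<subseteq> Cset" by (rule Cset_cspan)
  then have "l2_closure (cspan (range ?\<phi>)) \<subseteq> l2_closure Cset" unfolding l2_closure_def by blast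
  then show ?thesis unfolding qsupp_def using Cset_closure Cset_unif by blast
qed

lemma bell_mul: "bell y e * bell y' e = (if y = e \<and> y' = e then 1/2 else 0)"
proof -
  have "complex_of_real (1 / sqrt 2) * complex_of_real (1 / sqrt 2) = complex_of_real (1/2)"
    by (simp flip: of_real_mult)
  then show ?thesis by (simp add: bell_def)
qed

lemma ptrace_rhoo: "ptrace (ptrace (rhoo \<rho>)) (x,y,w,r) (x',y',w',r') =
  (if x = zero2 \<and> x' = zero2 \<and> w = zero2 \<and> w' = zero2 \<and> y = y' then 1/2 * tau \<rho> r r' else 0)"
proof -
  have u: "(UNIV :: unit set) = {()}" by auto
  have "ptrace (ptrace (rhoo \<rho>)) (x,y,w,r) (x',y',w',r') = (\<Sum>e\<in>UNIV. rhoA \<rho> ((x,y,w,r),e) ((x',y',w',r'),e))"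
    by (simp add: ptrace_def rhoo_def u)
  also have "\<dots> = (\<Sum>e\<in>UNIV. (if x = zero2 \<and> w = zero2 \<and> x' = zero2 \<and> w' = zero2 then bell y e * bell y' e else 0) * tau \<rho> r r')"
    by (rule sum.cong[OF refl]) (simp add: rhoA_def Vf_def getr_def)
  also have "\<dots> = (if x = zero2 \<and> x' = zero2 \<and> w = zero2 \<and> w' = zero2 \<and> y = y' then 1/2 * tau \<rho> r r' else 0)"
    by (cases y; cases y') (auto simp: sum_bool bell_mul)
  finally show ?thesis .
qed

theorem mainTheorem1:
  fixes UK U0 :: "(bool \<times> bool) qmat" and \<rho> :: "'r mem qmat"
  assumes "isometry_mat UK" and "\<forall>k. UK k (False, False) = 1 / 2"
    and "isometry_mat U0" and "\<forall>k. U0 k (False, False) = (if k = (False, False) then 1 else 0)"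
    and "mixed_memory \<rho>"
  shows "sat ((Keygen UK U0 ;; Enc ;; Erase U0) \<rho>) (uniform_y :: ((('r mem \<times> bool) \<times> unit) qvec) set)"
proof -
  interpret progctx UK U0 \<rho>
    by unfold_locales (use assms(2,4) in blast)+
  have F: "(Keygen UK U0 ;; Enc ;; Erase U0) \<rho> = ptrace (ptrace (rhoo \<rho>))"
  proof (intro ext)
    fix m m' :: "'r mem"
    obtain x y w r where m: "m = (x,y,w,r)" by (cases m) auto
    obtain x' y' w' r' where m': "m' = (x',y',w',r')" by (cases m') auto
    show "(Keygen UK U0 ;; Enc ;; Erase U0) \<rho> m m' = ptrace (ptrace (rhoo \<rho>)) m m'"
      unfolding m m' by (simp only: prog_eq ptrace_rhoo)
  qed
  show ?thesis unfolding sat_def F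
  proof (intro exI[of _ "rhoo \<rho>"] conjI)
    show "mixed_memory (rhoo \<rho>)" by (rule rhoo_mixed[OF assms(5)])
    show "separable_mm (rhoo \<rho>)" by (rule rhoo_sep[OF assms(5)])
    show "qsupp (rhoo \<rho>) \<subseteq> uniform_y" by (rule qsupp_rhoo[OF assms(5)])
  qed (rule refl)
qed


end
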